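(* Let $p\ge1$ and let $F:\mathbb{R}\to E^p$ be $D$-continuous. Then for every compact set $U\subset\mathbb{R}$, the set $F(U)=\{F(t): t\in U\}$ is uniformly-support-bounded, i.e. there is a compact set $K\subset\mathbb{R}^p$ such that $[F(t)]_0\subset K$ for all $t\in U$.
   Context: A fuzzy subset of $\mathbb{R}^p$ is a function $u:\mathbb{R}^p\to[0,1]$. Its $\alpha$-cut is $[u]_\alpha=\{x\in\mathbb{R}^p: u(x)\ge\alpha\}$ for $\alpha\in(0,1]$, and $[u]_0=\overline{\{x\in\mathbb{R}^p: u(x)>0\}}$. The set $E^p$ of $p$-dimensional fuzzy numbers consists of all fuzzy subsets $u$ of $\mathbb{R}^p$ such that $[u]_\alpha$ is a nonempty compact convex subset of $\mathbb{R}^p$ for every $\alpha\in[0,1]$. The sendograph of $u\in E^p$ is $\mathrm{send}\,u=\{(x,\alpha)\in[u]_0\times[0,1]: u(x)\ge\alpha\}\subset\mathbb{R}^{p+1}$. For nonempty compact $U,V\subset\mathbb{R}^{p+1}$ (with the Euclidean metric $d$), the Hausdorff metric is $H(U,V)=\max\{H^*(U,V),H^*(V,U)\}$ with $H^*(U,V)=\sup_{a\in U}\inf_{b\in V}d(a,b)$. The sendograph metric on $E^p$ is $D(u,v)=H(\mathrm{send}\,u,\mathrm{send}\,v)$. A function $F:\mathbb{R}\to E^p$ is $D$-continuous if $\lim_{y\to x}D(F(y),F(x))=0$ for every $x\in\mathbb{R}$. *)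

theory Defs
  imports "HOL-Analysis.Analysis"
begin

text \<open>Fuzzy subsets of R^p are modelled as functions u :: 'a \<Rightarrow> real with 'a a
  Euclidean space (so p = DIM('a) \<ge> 1); values in [0,1] are required in fuzzy_number.\<close>

definition cut :: "('a::euclidean_space \<Rightarrow> real) \<Rightarrow> real \<Rightarrow> 'a set" where
  "cut u \<alpha> = (if \<alpha> = 0 then closure {x. u x > 0} else {x. u x \<ge> \<alpha>})"

definition fuzzy_number :: "('a::euclidean_space \<Rightarrow> real) \<Rightarrow> bool" where
  "fuzzy_number u \<longleftrightarrow> (\<forall>x. 0 \<le> u x \<and> u x \<le> 1) \<and>
     (\<forall>\<alpha>\<in>{0..1}. cut u \<alpha> \<noteq> {} \<and> compact (cut u \<alpha>) \<and> convex (cut u \<alpha>))"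

text \<open>Sendograph, a subset of R^p \<times> R = R^(p+1) (the product metric on 'a \<times> real is Euclidean).\<close>
definition send :: "('a::euclidean_space \<Rightarrow> real) \<Rightarrow> ('a \<times> real) set" where
  "send u = {(x, \<alpha>). x \<in> cut u 0 \<and> \<alpha> \<in> {0..1} \<and> u x \<ge> \<alpha>}"

definition hausdorff_semi :: "'b::metric_space set \<Rightarrow> 'b set \<Rightarrow> real" where
  "hausdorff_semi U V = (SUP a\<in>U. INF b\<in>V. dist a b)"

definition hausdorff :: "'b::metric_space set \<Rightarrow> 'b set \<Rightarrow> real" where
  "hausdorff U V = max (hausdorff_semi U V) (hausdorff_semi V U)"

definition sendograph_metric :: "('a::euclidean_space \<Rightarrow> real) \<Rightarrow> ('a \<Rightarrow> real) \<Rightarrow> real" where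
  "sendograph_metric u v = hausdorff (send u) (send v)"

end

theory Submission
  imports Defs
begin

lemma send_bounded:
  assumes "fuzzy_number u" shows "bounded (send u)"
proof -
  have "compact (cut u 0)" using assms unfolding fuzzy_number_def by auto
  hence "compact (cut u 0 \<times> {0..(1::real)})" by (intro compact_Times) auto
  moreover have "send u \<subseteq> cut u 0 \<times> {0..1}" unfolding send_def by auto
  ultimately show ?thesis using compact_imp_bounded bounded_subset by blast
qed

lemma send_nonempty:
  assumes "fuzzy_number u" shows "send u \<noteq> {}"
proof -
  from assms obtain z where "z \<in> cut u 0" unfolding fuzzy_number_def by fastforce
  moreover have "u z \<ge> 0" using assms unfolding fuzzy_number_def by auto
  ultimately have "(z,0) \<in> send u" unfolding send_def by auto
  thus ?thesis by auto
qed

lemma inf_le_semi: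
  fixes U V :: "'b::metric_space set"
  assumes "a \<in> U" "bounded U" "V \<noteq> {}"
  shows "(INF b\<in>V. dist a b) \<le> hausdorff_semi U V"
proof -
  obtain b0 where b0: "b0 \<in> V" using assms by auto
  obtain c r where cr: "\<forall>x\<in>U. dist c x \<le> r" using assms(2) unfolding bounded_def by auto
  have "bdd_above ((\<lambda>a. INF b\<in>V. dist a b) ` U)"
  proof (rule bdd_aboveI2)
    fix x assume x: "x \<in> U"
    have "(INF b\<in>V. dist x b) \<le> dist x b0"
      by (rule cINF_lower[OF _ b0]) (auto intro: bdd_belowI2[where m=0])
    also have "\<dots> \<le> dist c x + dist c b0" by (metis dist_commute dist_triangle)
    also have "\<dots> \<le> r + dist c b0" using cr x by auto
    finally show "(INF b\<in>V. dist x b) \<le> r + dist c b0" .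
  qed
  thus ?thesis unfolding hausdorff_semi_def using assms(1) by (rule cSUP_upper2) auto
qed

lemma key:
  assumes u: "fuzzy_number u" and v: "fuzzy_number v"
    and d: "sendograph_metric v u < 1" and R: "cut u 0 \<subseteq> cball 0 R"
  shows "cut v 0 \<subseteq> cball 0 (R+1)"
proof
  fix z assume z: "z \<in> cut v 0"
  have "v z \<ge> 0" using v unfolding fuzzy_number_def by auto
  hence zs: "(z,0) \<in> send v" using z unfolding send_def by auto
  have "(INF b\<in>send u. dist (z,0::real) b) \<le> hausdorff_semi (send v) (send u)"
    by (rule inf_le_semi[OF zs send_bounded[OF v] send_nonempty[OF u]])
  also have "\<dots> < 1" using d unfolding sendograph_metric_def hausdorff_def by auto
  finally have "(INF b\<in>send u. dist (z,0::real) b) < 1" .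
  then obtain b where b: "b \<in> send u" "dist (z,0::real) b < 1"
    using cINF_less_iff[OF send_nonempty[OF u], of "\<lambda>b. dist (z,0::real) b"]
    by (auto intro: bdd_belowI2[where m=0])
  obtain w \<alpha> where bw: "b = (w,\<alpha>)" by (cases b)
  have "w \<in> cut u 0" using b bw unfolding send_def by auto
  hence "norm w \<le> R" using R by auto
  moreover have "dist z w \<le> dist (z,0::real) b" using bw dist_fst_le[of "(z,0::real)" b] by simp
  moreover have "norm z \<le> norm w + dist z w"
    using norm_triangle_ineq[of "z - w" w] by (simp add: dist_norm)
  ultimately have "norm z \<le> R + 1" using b(2) by linarith
  thus "z \<in> cball 0 (R+1)" by auto
qed

theorem theorem2p2:
  fixes F :: "real \<Rightarrow> ('a::euclidean_space \<Rightarrow> real)"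
    and U :: "real set"
  assumes fuzzy: "\<forall>t. fuzzy_number (F t)"
    and cont: "\<forall>x. ((\<lambda>y. sendograph_metric (F y) (F x)) \<longlongrightarrow> 0) (at x)"
    and U: "compact U"
  shows "\<exists>K::'a set. compact K \<and> (\<forall>t\<in>U. cut (F t) 0 \<subseteq> K)"
proof -
  have loc: "\<exists>Q R. open Q \<and> x \<in> Q \<and> (\<forall>y\<in>Q. cut (F y) 0 \<subseteq> cball 0 R)" for x
  proof -
    have "compact (cut (F x) 0)" using fuzzy unfolding fuzzy_number_def by auto
    then obtain R where R0: "\<forall>z\<in>cut (F x) 0. norm z \<le> R"
      using compact_imp_bounded bounded_iff by metis
    hence R: "cut (F x) 0 \<subseteq> cball 0 R" by auto
    have "\<forall>\<^sub>F y in at x. dist (sendograph_metric (F y) (F x)) 0 < 1"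
      using tendstoD[OF cont[rule_format, of x], of 1] by simp
    then obtain S where S: "open S" "x \<in> S" "\<forall>y\<in>S. y \<noteq> x \<longrightarrow> dist (sendograph_metric (F y) (F x)) 0 < 1"
      unfolding eventually_at_topological by auto
    have "\<forall>y\<in>S. cut (F y) 0 \<subseteq> cball 0 (R+1)"
    proof
      fix y assume y: "y \<in> S"
      show "cut (F y) 0 \<subseteq> cball 0 (R+1)"
      proof (cases "y = x")
        case True thus ?thesis using R by auto
      next
        case False
        hence "sendograph_metric (F y) (F x) < 1" using S y by auto
        thus ?thesis by (rule key[OF fuzzy[rule_format] fuzzy[rule_format] _ R])
      qed
    qed
    thus ?thesis using S by blast
  qed
  then have "\<forall>x. \<exists>Q R. open Q \<and> x \<in> Q \<and> (\<forall>y\<in>Q. cut (F y) 0 \<subseteq> cball 0 R)" by blast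
  then obtain Q R where OR: "\<And>x. open (Q x) \<and> x \<in> Q x \<and> (\<forall>y\<in>Q x. cut (F y) 0 \<subseteq> cball 0 (R x))"
    by (subst (asm) choice_iff, subst (asm) choice_iff) blast
  have "U \<subseteq> \<Union>(Q ` U)" using OR by auto
  then obtain D where D: "D \<subseteq> U" "finite D" "U \<subseteq> \<Union>(Q ` D)"
    using compactE_image[OF U, of U Q] OR by blast
  define M where "M = (\<Sum>x\<in>D. \<bar>R x\<bar>)"
  have "\<forall>t\<in>U. cut (F t) 0 \<subseteq> cball 0 M"
  proof
    fix t assume "t \<in> U"
    then obtain x where x: "x \<in> D" "t \<in> Q x" using D by auto
    have "R x \<le> M" unfolding M_def
      using member_le_sum[OF x(1), of "\<lambda>x. \<bar>R x\<bar>"] D(2) by auto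
    thus "cut (F t) 0 \<subseteq> cball 0 M" using OR[of x] x by (fastforce simp: subset_iff)
  qed
  thus ?thesis by (intro exI[of _ "cball 0 M"] conjI compact_cball)
qed

end
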